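(* Consider two agents with weights $(w_1,w_2)$, where $r:=w_2/w_1\ge1$, and $m$ items with each utility $u_i(g)$ drawn independently from a PDF-bounded distribution $\mathcal{D}$. Then with probability at least $1-O(m^2/r)$, no weighted envy-free (WEF) allocation exists. The same holds for weighted proportionality (WPROP).
   Context: Utilities are additive. PDF-bounded: non-atomic with density between constants $\alpha,\beta>0$ on $[0,1]$. An allocation $(A_1,A_2)$ (partition of the items $M$) is WEF if $u_i(A_i)/w_i\ge u_i(A_j)/w_j$ for $i,j\in\{1,2\}$, and WPROP if $u_i(A_i)\ge\frac{w_i}{w_1+w_2}u_i(M)$ for $i\in\{1,2\}$. *)

theory Defs
  imports "HOL-Probability.Probability"
begin

definition pdf_bounded :: "real \<Rightarrow> real \<Rightarrow> real measure \<Rightarrow> bool" where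
  "pdf_bounded \<alpha> \<beta> D \<longleftrightarrow>
     (\<exists>f. f \<in> borel_measurable lborel
        \<and> (\<forall>x\<in>{0..1}. \<alpha> \<le> f x \<and> f x \<le> \<beta>)
        \<and> (\<forall>x. x \<notin> {0..1} \<longrightarrow> f x = 0)
        \<and> D = density lborel (\<lambda>x. ennreal (f x)))"

definition bundle_val :: "(nat \<times> nat \<Rightarrow> real) \<Rightarrow> nat \<Rightarrow> nat set \<Rightarrow> real" where
  "bundle_val u i S = (\<Sum>g\<in>S. u (i, g))"

definition is_alloc :: "nat set \<Rightarrow> (nat \<Rightarrow> nat set) \<Rightarrow> bool" where
  "is_alloc M A \<longleftrightarrow> A 1 \<union> A 2 = M \<and> A 1 \<inter> A 2 = {}"

definition WEF :: "(nat \<Rightarrow> real) \<Rightarrow> (nat \<times> nat \<Rightarrow> real) \<Rightarrow> (nat \<Rightarrow> nat set) \<Rightarrow> bool" where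
  "WEF w u A \<longleftrightarrow> (\<forall>i\<in>{1,2}. \<forall>j\<in>{1,2}.
      bundle_val u i (A i) / w i \<ge> bundle_val u i (A j) / w j)"

definition WPROP :: "(nat \<Rightarrow> real) \<Rightarrow> (nat \<times> nat \<Rightarrow> real) \<Rightarrow> nat set \<Rightarrow> (nat \<Rightarrow> nat set) \<Rightarrow> bool" where
  "WPROP w u M A \<longleftrightarrow> (\<forall>i\<in>{1,2}.
      bundle_val u i (A i) \<ge> w i / (w 1 + w 2) * bundle_val u i M)"

definition utility_space :: "real measure \<Rightarrow> nat \<Rightarrow> (nat \<times> nat \<Rightarrow> real) measure" where
  "utility_space D m = PiM ({1,2} \<times> {..<m}) (\<lambda>_. D)"

end

theory Submission imports Defs begin

lemma D_bound:
  assumes pb: "pdf_bounded \<alpha> \<beta> D" and c: "c \<ge> 0" and b: "\<beta> > 0"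
  shows "measure D (- {c<..1}) \<le> \<beta> * c"
proof -
  obtain f where fm: "f \<in> borel_measurable lborel" and f01: "\<forall>x\<in>{0..1}. \<alpha> \<le> f x \<and> f x \<le> \<beta>"
    and f0: "\<forall>x. x \<notin> {0..1} \<longrightarrow> f x = 0" and D: "D = density lborel (\<lambda>x. ennreal (f x))"
    using pb unfolding pdf_bounded_def by blast
  have "emeasure D (- {c<..1}) = (\<integral>\<^sup>+ x. ennreal (f x) * indicator (- {c<..1}) x \<partial>lborel)"
    using fm unfolding D by (subst emeasure_density) auto
  also have "\<dots> \<le> (\<integral>\<^sup>+ x. ennreal \<beta> * indicator {0..c} x \<partial>lborel)"
  proof (intro nn_integral_mono)
    fix x
    show "ennreal (f x) * indicator (- {c<..1}) x \<le> ennreal \<beta> * indicator {0..c} x"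
    proof (cases "x \<in> {0..1}")
      case True
      then show ?thesis using f01 by (auto simp: indicator_def intro!: ennreal_leI)
    next
      case False
      then show ?thesis using f0 by auto
    qed
  qed
  also have "\<dots> = ennreal (\<beta> * c)"
    using c b by (simp add: nn_integral_cmult_indicator ennreal_mult)
  finally have "emeasure D (- {c<..1}) \<le> ennreal (\<beta> * c)" .
  then show ?thesis using b c by (simp add: measure_def enn2real_leI)
qed
lemma no_fair:
  assumes m: "m \<ge> 1" and w1: "w 1 > 0" and w2: "w 2 > 0"
    and H: "\<forall>i\<in>{1,2}. \<forall>g\<in>{..<m}. real m * w 1 / w 2 < u (i,g) \<and> u (i,g) \<le> 1"
    and A: "is_alloc {..<m} A"
  shows "\<not> WEF w u A \<and> \<not> WPROP w u {..<m} A"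
proof -
  have c0: "real m * w 1 / w 2 > 0" using m w1 w2 by simp
  have A1: "A 1 \<subseteq> {..<m}" and A2: "A 2 \<subseteq> {..<m}" and dis: "A 1 \<inter> A 2 = {}"
    and un: "A 1 \<union> A 2 = {..<m}" using A unfolding is_alloc_def by auto
  have fin1: "finite (A 1)" and fin2: "finite (A 2)" using A1 A2 finite_subset by auto
  have split: "bundle_val u i {..<m} = bundle_val u i (A 1) + bundle_val u i (A 2)" for i
    unfolding bundle_val_def using un dis fin1 fin2 by (metis sum.union_disjoint)
  have pos: "\<And>i g. i \<in> {1,2} \<Longrightarrow> g \<in> {..<m} \<Longrightarrow> u (i,g) > 0"
  proof -
    fix i :: nat and g assume "i \<in> {1,2}" "g \<in> {..<m}"
    then have "real m * w 1 / w 2 < u (i,g)" using H by blast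
    then show "u (i,g) > 0" using c0 by linarith
  qed
  show ?thesis
  proof (cases "A 1 = {}")
    case True
    then have "A 2 = {..<m}" using un by auto
    have "bundle_val u 1 {..<m} > 0" unfolding bundle_val_def
      using m pos by (intro sum_pos) (auto simp: lessThan_empty_iff)
    moreover have "bundle_val u 1 (A 1) = 0" using True by (simp add: bundle_val_def)
    ultimately have b: "bundle_val u 1 (A 2) > 0" using split[of 1] by simp
    have "\<not> WEF w u A"
    proof
      assume "WEF w u A"
      then have "bundle_val u 1 (A 1) / w 1 \<ge> bundle_val u 1 (A 2) / w 2" unfolding WEF_def by auto
      then show False using b w2 \<open>bundle_val u 1 (A 1) = 0\<close> by (simp add: divide_le_0_iff)
    qed
    moreover have "\<not> WPROP w u {..<m} A"
    proof
      assume "WPROP w u {..<m} A"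
      then have "bundle_val u 1 (A 1) \<ge> w 1 / (w 1 + w 2) * bundle_val u 1 {..<m}" unfolding WPROP_def by auto
      moreover have "w 1 / (w 1 + w 2) * bundle_val u 1 {..<m} > 0"
        using w1 w2 \<open>bundle_val u 1 {..<m} > 0\<close> by simp
      ultimately show False using \<open>bundle_val u 1 (A 1) = 0\<close> by simp
    qed
    ultimately show ?thesis by blast
  next
    case False
    then obtain g where g: "g \<in> A 1" by auto
    have "u (2,g) \<le> bundle_val u 2 (A 1)" unfolding bundle_val_def
      using fin1 g A1 pos by (intro member_le_sum) (auto intro: less_imp_le)
    moreover have "u (2,g) > real m * w 1 / w 2" using H g A1 by auto
    ultimately have lo: "bundle_val u 2 (A 1) > real m * w 1 / w 2" by simp
    have "bundle_val u 2 (A 2) \<le> (\<Sum>g\<in>A 2. 1)" unfolding bundle_val_def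
      using H A2 by (intro sum_mono) auto
    also have "\<dots> = real (card (A 2))" by simp
    also have "\<dots> \<le> real m" using card_mono[OF _ A2] by simp
    finally have hi: "bundle_val u 2 (A 2) \<le> real m" .
    have lo': "w 2 * bundle_val u 2 (A 1) > real m * w 1" using lo w2 by (simp add: field_simps)
    have "\<not> WEF w u A"
    proof
      assume "WEF w u A"
      then have "bundle_val u 2 (A 2) / w 2 \<ge> bundle_val u 2 (A 1) / w 1" unfolding WEF_def by auto
      then have "w 1 * bundle_val u 2 (A 2) \<ge> w 2 * bundle_val u 2 (A 1)" using w1 w2 by (simp add: field_simps)
      moreover have "w 1 * bundle_val u 2 (A 2) \<le> w 1 * real m" using hi w1 by simp
      ultimately show False using lo' by (simp add: algebra_simps)
    qed
    moreover have "\<not> WPROP w u {..<m} A"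
    proof
      assume "WPROP w u {..<m} A"
      then have "bundle_val u 2 (A 2) \<ge> w 2 / (w 1 + w 2) * bundle_val u 2 {..<m}" unfolding WPROP_def by auto
      then have "(w 1 + w 2) * bundle_val u 2 (A 2) \<ge> w 2 * (bundle_val u 2 (A 1) + bundle_val u 2 (A 2))"
        using w1 w2 split[of 2] by (simp add: field_simps)
      then have "w 1 * bundle_val u 2 (A 2) \<ge> w 2 * bundle_val u 2 (A 1)" by (simp add: algebra_simps)
      moreover have "w 1 * bundle_val u 2 (A 2) \<le> w 1 * real m" using hi w1 by simp
      ultimately show False using lo' by (simp add: algebra_simps)
    qed
    ultimately show ?thesis by blast
  qed
qed
lemma WEF_cong: "A 1 = B 1 \<Longrightarrow> A 2 = B 2 \<Longrightarrow> WEF w u A = WEF w u B"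
  unfolding WEF_def by simp

lemma WPROP_cong: "A 1 = B 1 \<Longrightarrow> A 2 = B 2 \<Longrightarrow> WPROP w u M A = WPROP w u M B"
  unfolding WPROP_def by simp

definition mkA :: "nat set \<Rightarrow> nat set \<Rightarrow> nat \<Rightarrow> nat set" where
  "mkA M S = (\<lambda>i. if i = 1 then S else M - S)"

lemma ex_alloc_iff:
  assumes cong: "\<And>A B. A 1 = B 1 \<Longrightarrow> A 2 = B 2 \<Longrightarrow> Q A = Q B"
  shows "(\<exists>A. is_alloc M A \<and> Q A) \<longleftrightarrow> (\<exists>S\<in>Pow M. Q (mkA M S))"
proof
  assume "\<exists>A. is_alloc M A \<and> Q A"
  then obtain A where A: "is_alloc M A" "Q A" by blast
  then have "A 1 \<in> Pow M" "A 2 = M - A 1" unfolding is_alloc_def by auto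
  moreover have "Q (mkA M (A 1)) = Q A" using \<open>A 2 = M - A 1\<close> by (intro cong) (auto simp: mkA_def)
  ultimately show "\<exists>S\<in>Pow M. Q (mkA M S)" using A by blast
next
  assume "\<exists>S\<in>Pow M. Q (mkA M S)"
  then obtain S where "S \<subseteq> M" "Q (mkA M S)" by blast
  moreover have "is_alloc M (mkA M S)" using \<open>S \<subseteq> M\<close> unfolding is_alloc_def mkA_def by auto
  ultimately show "\<exists>A. is_alloc M A \<and> Q A" by blast
qed

lemma bv_meas:
  assumes sD: "sets D = sets borel" and S: "S \<subseteq> {..<m}" and i: "i \<in> {1,2}"
  shows "(\<lambda>u. bundle_val u i S) \<in> borel_measurable (PiM ({1::nat,2} \<times> {..<m}) (\<lambda>_. D))"
  unfolding bundle_val_def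
proof (intro borel_measurable_sum)
  fix g assume "g \<in> S"
  then have "(i,g) \<in> {1,2} \<times> {..<m}" using S i by auto
  then have "(\<lambda>u. u (i,g)) \<in> measurable (PiM ({1::nat,2} \<times> {..<m}) (\<lambda>_. D)) D"
    by (rule measurable_component_singleton)
  then show "(\<lambda>u. u (i,g)) \<in> borel_measurable (PiM ({1::nat,2} \<times> {..<m}) (\<lambda>_. D))"
    using measurable_cong_sets[OF refl sD] by blast
qed

lemma pred_WEF:
  assumes sD: "sets D = sets borel"
  shows "Measurable.pred (PiM ({1::nat,2} \<times> {..<m}) (\<lambda>_. D)) (\<lambda>u. \<exists>S\<in>Pow {..<m}. WEF w u (mkA {..<m} S))"
proof (rule pred_intros_finite(4))
  fix S assume S: "S \<in> Pow {..<m}"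
  have sub: "mkA {..<m} S i \<subseteq> {..<m}" for i using S by (auto simp: mkA_def)
  show "Measurable.pred (PiM ({1::nat,2} \<times> {..<m}) (\<lambda>_. D)) (\<lambda>u. WEF w u (mkA {..<m} S))"
    unfolding WEF_def
    by (intro pred_intros_finite(3) finite.intros, unfold pred_def,
        intro borel_measurable_le borel_measurable_divide bv_meas[OF sD sub] borel_measurable_const; simp)
qed simp

lemma pred_WPROP:
  assumes sD: "sets D = sets borel"
  shows "Measurable.pred (PiM ({1::nat,2} \<times> {..<m}) (\<lambda>_. D)) (\<lambda>u. \<exists>S\<in>Pow {..<m}. WPROP w u {..<m} (mkA {..<m} S))"
proof (rule pred_intros_finite(4))
  fix S assume S: "S \<in> Pow {..<m}"
  have sub: "mkA {..<m} S i \<subseteq> {..<m}" for i using S by (auto simp: mkA_def)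
  show "Measurable.pred (PiM ({1::nat,2} \<times> {..<m}) (\<lambda>_. D)) (\<lambda>u. WPROP w u {..<m} (mkA {..<m} S))"
    unfolding WPROP_def
    by (intro pred_intros_finite(3) finite.intros, unfold pred_def,
        intro borel_measurable_le borel_measurable_times bv_meas[OF sD sub] bv_meas[OF sD order_refl] borel_measurable_const; simp)
qed simp

lemma pdf_sets: "pdf_bounded \<alpha> \<beta> D \<Longrightarrow> sets D = sets borel"
  unfolding pdf_bounded_def by auto

theorem theorem5:
  fixes \<alpha> \<beta> :: real
  assumes "\<alpha> > 0" and "\<beta> > 0"
  shows "\<exists>C::real. \<forall>(D::real measure) (m::nat) (w::nat \<Rightarrow> real).
     pdf_bounded \<alpha> \<beta> D \<longrightarrow> prob_space D \<longrightarrow> m \<ge> 1 \<longrightarrow>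
     w 1 > 0 \<longrightarrow> w 2 > 0 \<longrightarrow> w 2 / w 1 \<ge> 1 \<longrightarrow>
     (let P = utility_space D m; r = w 2 / w 1;
          NoWEF = {u \<in> space P. \<not> (\<exists>A. is_alloc {..<m} A \<and> WEF w u A)};
          NoWPROP = {u \<in> space P. \<not> (\<exists>A. is_alloc {..<m} A \<and> WPROP w u {..<m} A)}
      in NoWEF \<in> sets P \<and> measure P NoWEF \<ge> 1 - C * real m ^ 2 / r
       \<and> NoWPROP \<in> sets P \<and> measure P NoWPROP \<ge> 1 - C * real m ^ 2 / r)"
proof (intro exI[of _ "2 * \<beta>"] allI impI)
  fix D :: "real measure" and m :: nat and w :: "nat \<Rightarrow> real"
  assume pb: "pdf_bounded \<alpha> \<beta> D" and ps: "prob_space D" and m: "m \<ge> 1"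
    and w1: "w 1 > 0" and w2: "w 2 > 0" and r1: "w 2 / w 1 \<ge> 1"
  define I where "I = {1::nat,2} \<times> {..<m}"
  define P where "P = utility_space D m"
  have PI: "P = PiM I (\<lambda>_. D)" unfolding P_def I_def utility_space_def by simp
  have sD: "sets D = sets borel" using pb by (rule pdf_sets)
  interpret DD: prob_space D by (rule ps)
  interpret PP: product_prob_space "\<lambda>_. D" I
    by (simp add: product_prob_space_def product_prob_space_axioms_def product_sigma_finite_def
        ps DD.sigma_finite_measure_axioms)
  define c where "c = real m * w 1 / w 2"
  have c0: "c \<ge> 0" unfolding c_def using w1 w2 by simp
  define Good where "Good = {u \<in> space P. \<forall>x\<in>I. u x \<in> {c<..1}}"
  define Bad where "Bad = (\<Union>x\<in>I. {u \<in> space P. u x \<in> - {c<..1}})"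
  have Bx: "{u \<in> space P. u x \<in> - {c<..1}} \<in> sets P" if "x \<in> I" for x
  proof -
    have "(\<lambda>u. u x) \<in> measurable P D" unfolding PI using that by (rule measurable_component_singleton)
    moreover have "- {c<..1} \<in> sets D" using sD by simp
    ultimately have "(\<lambda>u. u x) -` (- {c<..1}) \<inter> space P \<in> sets P" by (rule measurable_sets)
    then show ?thesis by (simp add: vimage_def Int_def conj_commute)
  qed
  have finI: "finite I" unfolding I_def by simp
  have Bad_sets: "Bad \<in> sets P" unfolding Bad_def using finI Bx by (intro sets.finite_UN) auto
  have GB: "Good = space P - Bad" unfolding Good_def Bad_def by auto
  have mx: "measure P {u \<in> space P. u x \<in> - {c<..1}} \<le> \<beta> * c" if "x \<in> I" for x
  proof -
    have "emeasure P {u \<in> space P. u x \<in> - {c<..1}} = emeasure D (- {c<..1})"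
      unfolding PI using that sD by (intro PP.emeasure_PiM_Collect_single) auto
    then have "measure P {u \<in> space P. u x \<in> - {c<..1}} = measure D (- {c<..1})"
      by (simp add: measure_def)
    also have "\<dots> \<le> \<beta> * c" using D_bound[OF pb c0 assms(2)] .
    finally show ?thesis .
  qed
  have "measure P Bad \<le> (\<Sum>x\<in>I. measure P {u \<in> space P. u x \<in> - {c<..1}})"
    unfolding Bad_def using finI Bx by (intro measure_UNION_le) auto
  also have "\<dots> \<le> (\<Sum>x\<in>I. \<beta> * c)" using mx by (intro sum_mono) auto
  also have "\<dots> = 2 * real m * (\<beta> * c)" unfolding I_def by (simp add: card_cartesian_product)
  also have "\<dots> = 2 * \<beta> * real m ^ 2 / (w 2 / w 1)" unfolding c_def using w1 w2
    by (simp add: field_simps power2_eq_square)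
  finally have mBad: "measure P Bad \<le> 2 * \<beta> * real m ^ 2 / (w 2 / w 1)" .
  have Gsets: "Good \<in> sets P" unfolding GB using Bad_sets by auto
  have mGood: "measure P Good \<ge> 1 - 2 * \<beta> * real m ^ 2 / (w 2 / w 1)"
    unfolding GB PI using PP.prob_compl[OF Bad_sets[unfolded PI]] mBad[unfolded PI] by simp
  have Hgood: "\<not> WEF w u A \<and> \<not> WPROP w u {..<m} A" if "u \<in> Good" "is_alloc {..<m} A" for u A
  proof (rule no_fair[OF m w1 w2 _ that(2)])
    show "\<forall>i\<in>{1,2}. \<forall>g\<in>{..<m}. real m * w 1 / w 2 < u (i,g) \<and> u (i,g) \<le> 1"
      using that(1) unfolding Good_def I_def c_def by auto
  qed
  define NoWEF where "NoWEF = {u \<in> space P. \<not> (\<exists>A. is_alloc {..<m} A \<and> WEF w u A)}"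
  define NoWPROP where "NoWPROP = {u \<in> space P. \<not> (\<exists>A. is_alloc {..<m} A \<and> WPROP w u {..<m} A)}"
  have eq1: "NoWEF = {u \<in> space P. \<not> (\<exists>S\<in>Pow {..<m}. WEF w u (mkA {..<m} S))}"
    unfolding NoWEF_def by (subst ex_alloc_iff[where Q="\<lambda>A. WEF w _ A"]) (auto simp: WEF_def)
  have eq2: "NoWPROP = {u \<in> space P. \<not> (\<exists>S\<in>Pow {..<m}. WPROP w u {..<m} (mkA {..<m} S))}"
    unfolding NoWPROP_def by (subst ex_alloc_iff[where Q="\<lambda>A. WPROP w _ {..<m} A"]) (auto simp: WPROP_def)
  have s1: "NoWEF \<in> sets P" unfolding eq1
    using pred_intros_logic(2)[OF pred_WEF[OF sD, of m w]] unfolding pred_def PI I_def by simp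
  have s2: "NoWPROP \<in> sets P" unfolding eq2
    using pred_intros_logic(2)[OF pred_WPROP[OF sD, of m w]] unfolding pred_def PI I_def by simp
  have sub1: "Good \<subseteq> NoWEF" unfolding NoWEF_def using Hgood by (auto simp: Good_def)
  have sub2: "Good \<subseteq> NoWPROP" unfolding NoWPROP_def using Hgood by (auto simp: Good_def)
  have "measure P Good \<le> measure P NoWEF" using sub1 s1 unfolding PI by (intro PP.finite_measure_mono) auto
  moreover have "measure P Good \<le> measure P NoWPROP" using sub2 s2 unfolding PI by (intro PP.finite_measure_mono) auto
  ultimately show "let P = utility_space D m; r = w 2 / w 1;
          NoWEF = {u \<in> space P. \<not> (\<exists>A. is_alloc {..<m} A \<and> WEF w u A)};
          NoWPROP = {u \<in> space P. \<not> (\<exists>A. is_alloc {..<m} A \<and> WPROP w u {..<m} A)}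
      in NoWEF \<in> sets P \<and> measure P NoWEF \<ge> 1 - 2 * \<beta> * real m ^ 2 / r
       \<and> NoWPROP \<in> sets P \<and> measure P NoWPROP \<ge> 1 - 2 * \<beta> * real m ^ 2 / r"
    using s1 s2 mGood unfolding Let_def P_def[symmetric] NoWEF_def[symmetric] NoWPROP_def[symmetric]
    by linarith
qed

end
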